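(* Let $B\subseteq\mathbb{R}^n$ be a maximal lattice-free polyhedron with $m$ facets and let $c\in\operatorname{int}(B)$. Let $z_1,\dots,z_m\in\mathbb{Z}^n$ be integer points lying in the relative interiors of the $m$ distinct facets of $B$ (one in each). Then there exists $\epsilon\in(0,1)$ such that for all $i,j\in[m]$ with $i\ne j$, the segment $[z_i,z_j]$ has nonempty intersection with $(1-\epsilon)B+\epsilon c$.
   Context: A set $B\subseteq\mathbb{R}^n$ is lattice-free if it is an $n$-dimensional closed convex set with $\operatorname{int}(B)\cap\mathbb{Z}^n=\emptyset$; it is maximal lattice-free if it is not a proper subset of another lattice-free set. *)

theory Defs
  imports "HOL-Analysis.Analysis"
begin

definition integer_point :: "real ^ 'n \<Rightarrow> bool" where
  "integer_point x \<longleftrightarrow> (\<forall>i. x $ i \<in> \<int>)"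

definition lattice_free :: "(real ^ 'n) set \<Rightarrow> bool" where
  "lattice_free B \<longleftrightarrow> convex B \<and> closed B \<and> aff_dim B = int CARD('n) \<and>
     (\<forall>x \<in> interior B. \<not> integer_point x)"

definition maximal_lattice_free :: "(real ^ 'n) set \<Rightarrow> bool" where
  "maximal_lattice_free B \<longleftrightarrow> lattice_free B \<and>
     \<not> (\<exists>B'. lattice_free B' \<and> B \<subset> B')"

end

theory Submission
  imports Defs
begin

lemma facet_eq_aux:
  fixes S :: "'a::euclidean_space set"
  assumes "convex S" "F facet_of S" "G facet_of S" "G \<inter> rel_interior F \<noteq> {}"
  shows "F = G"
proof -
  have GF: "G face_of S" "F face_of S" using assms facet_of_imp_face_of by auto
  have FS: "F \<subseteq> S" by (simp add: GF(2) face_of_imp_subset)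
  have "F \<subseteq> G" using subset_of_face_of[OF GF(1) FS assms(4)] .
  then have "F face_of G" using face_of_subset[OF GF(2)] GF(1) face_of_imp_subset by blast
  moreover have "aff_dim F = aff_dim G" using assms(2,3) by (simp add: facet_of_def)
  moreover have "convex G" using GF(1) face_of_imp_convex by blast
  ultimately show ?thesis using face_of_aff_dim_lt by fastforce
qed

lemma interior_eps:
  fixes B :: "'a::euclidean_space set"
  assumes "p \<in> interior B"
  shows "\<exists>e0. 0 < e0 \<and> e0 < 1 \<and> (\<forall>\<epsilon>. 0 < \<epsilon> \<and> \<epsilon> \<le> e0 \<longrightarrow>
           p \<in> (\<lambda>x. (1 - \<epsilon>) *\<^sub>R x + \<epsilon> *\<^sub>R c) ` B)"
proof -
  obtain r where r: "r > 0" "ball p r \<subseteq> B" using assms interior_def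
    by (meson mem_interior)
  define t where "t = r / (norm (p - c) + 1)"
  have t: "t > 0" unfolding t_def using r by (intro divide_pos_pos) (auto intro: add_nonneg_pos)
  have tn: "t * norm (p - c) < r"
  proof -
    have "t * norm (p - c) < t * (norm (p - c) + 1)" using t by simp
    also have "\<dots> = r"
    proof -
      have "norm (p - c) + 1 \<noteq> 0" using norm_ge_zero[of "p - c"] by linarith
      then show ?thesis unfolding t_def by simp
    qed
    finally show ?thesis .
  qed
  define e0 where "e0 = t / (1 + t)"
  have e0: "0 < e0" "e0 < 1" using t by (auto simp: e0_def)
  show ?thesis
  proof (intro exI conjI allI impI)
    fix \<epsilon> :: real assume h: "0 < \<epsilon> \<and> \<epsilon> \<le> e0"
    define s where "s = \<epsilon> / (1 - \<epsilon>)"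
    have e1: "\<epsilon> < 1" using h e0 by simp
    have "\<epsilon> * (1 + t) \<le> t" using h t by (simp add: e0_def field_simps)
    then have st: "s \<le> t" using e1 by (simp add: s_def field_simps)
    have s0: "s \<ge> 0" using h e1 by (simp add: s_def)
    define x where "x = p + s *\<^sub>R (p - c)"
    have "dist p x = s * norm (p - c)" by (simp add: x_def dist_norm s0)
    also have "\<dots> \<le> t * norm (p - c)" using st by (simp add: mult_right_mono)
    finally have "x \<in> B" using tn r by auto
    moreover have "(1 - \<epsilon>) *\<^sub>R x + \<epsilon> *\<^sub>R c = p"
    proof -
      have "(1 - \<epsilon>) * s = \<epsilon>" using e1 by (simp add: s_def)
      then have "(1 - \<epsilon>) *\<^sub>R x = (1 - \<epsilon>) *\<^sub>R p + \<epsilon> *\<^sub>R (p - c)"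
        by (simp add: x_def scaleR_add_right)
      then show ?thesis by (simp add: algebra_simps)
    qed
    ultimately show "p \<in> (\<lambda>x. (1 - \<epsilon>) *\<^sub>R x + \<epsilon> *\<^sub>R c) ` B" by (metis image_eqI)
  qed (use e0 in auto)
qed

lemma finite_eps:
  assumes "finite S"
    and "\<And>a. a \<in> S \<Longrightarrow> \<exists>e0::real. 0 < e0 \<and> e0 < 1 \<and> (\<forall>\<epsilon>. 0 < \<epsilon> \<and> \<epsilon> \<le> e0 \<longrightarrow> P a \<epsilon>)"
  shows "\<exists>e0::real. 0 < e0 \<and> e0 < 1 \<and> (\<forall>\<epsilon>. 0 < \<epsilon> \<and> \<epsilon> \<le> e0 \<longrightarrow> (\<forall>a\<in>S. P a \<epsilon>))"
  using assms
proof (induction S rule: finite_induct)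
  case empty
  then show ?case by (intro exI[of _ "1/2"]) auto
next
  case (insert x F)
  then obtain e1 where e1: "0 < e1 \<and> e1 < 1 \<and> (\<forall>\<epsilon>. 0 < \<epsilon> \<and> \<epsilon> \<le> e1 \<longrightarrow> (\<forall>a\<in>F. P a \<epsilon>))"
    by blast
  obtain e2 where e2: "0 < e2 \<and> e2 < 1 \<and> (\<forall>\<epsilon>. 0 < \<epsilon> \<and> \<epsilon> \<le> e2 \<longrightarrow> P x \<epsilon>)"
    using insert.prems by blast
  show ?case using e1 e2 by (intro exI[of _ "min e1 e2"]) auto
qed

theorem lemma6p1:
  fixes B :: "(real ^ 'n) set" and c :: "real ^ 'n" and m :: nat
    and f :: "nat \<Rightarrow> (real ^ 'n) set" and z :: "nat \<Rightarrow> real ^ 'n"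
  assumes "polyhedron B"
    and "maximal_lattice_free B"
    and "bij_betw f {1..m} {F. F facet_of B}"
    and "c \<in> interior B"
    and "\<And>i. i \<in> {1..m} \<Longrightarrow> integer_point (z i) \<and> z i \<in> rel_interior (f i)"
  shows "\<exists>\<epsilon>::real. 0 < \<epsilon> \<and> \<epsilon> < 1 \<and>
    (\<forall>i\<in>{1..m}. \<forall>j\<in>{1..m}. i \<noteq> j \<longrightarrow>
       closed_segment (z i) (z j) \<inter> ((\<lambda>x. (1 - \<epsilon>) *\<^sub>R x + \<epsilon> *\<^sub>R c) ` B) \<noteq> {})"
proof -
  have cvx: "convex B" and cl: "closed B"
    using assms(2) by (auto simp: maximal_lattice_free_def lattice_free_def)
  have ri: "rel_interior B = interior B" using assms(4) rel_interior_nonempty_interior by blast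
  have fac: "f i facet_of B" if "i \<in> {1..m}" for i
    using assms(3) that bij_betwE by blast
  have inj: "inj_on f {1..m}" using assms(3) bij_betw_def by blast
  have zin: "z i \<in> B" if "i \<in> {1..m}" for i
    using assms(5)[OF that] rel_interior_subset facet_of_imp_subset[OF fac[OF that]] by blast
  have key: "\<exists>p. p \<in> closed_segment (z i) (z j) \<and> p \<in> interior B"
    if ij: "i \<in> {1..m}" "j \<in> {1..m}" "i \<noteq> j" for i j
  proof -
    have fij: "f i \<noteq> f j" using inj_onD[OF inj _ ij(1) ij(2)] ij(3) by blast
    have zne: "z i \<noteq> z j"
    proof
      assume "z i = z j"
      moreover have "z j \<in> f j" using assms(5)[OF ij(2)] rel_interior_subset by blast
      moreover have "z i \<in> rel_interior (f i)" using assms(5)[OF ij(1)] by blast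
      ultimately have "f j \<inter> rel_interior (f i) \<noteq> {}" by auto
      then show False using facet_eq_aux[OF cvx fac[OF ij(1)] fac[OF ij(2)]] fij by blast
    qed
    define p where "p = midpoint (z i) (z j)"
    have po: "p \<in> open_segment (z i) (z j)" using zne by (simp add: p_def midpoint_in_open_segment)
    have "closed_segment (z i) (z j) \<subseteq> B"
      using cvx zin[OF ij(1)] zin[OF ij(2)] by (simp add: convex_contains_segment)
    then have pB: "p \<in> B" using po open_closed_segment by blast
    have "p \<in> interior B"
    proof (rule ccontr)
      assume "p \<notin> interior B"
      then have "p \<in> rel_frontier B" using pB ri cl by (simp add: rel_frontier_def closure_closed)
      then obtain F where F: "F facet_of B" "p \<in> F"
        using rel_frontier_of_polyhedron[OF assms(1)] by blast
      have "z i \<in> F \<and> z j \<in> F"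
        using face_ofD[OF facet_of_imp_face_of[OF F(1)] po zin[OF ij(1)] zin[OF ij(2)] F(2)] .
      then have "f i = F" "f j = F"
        using facet_eq_aux[OF cvx fac[OF ij(1)] F(1)] facet_eq_aux[OF cvx fac[OF ij(2)] F(1)]
          assms(5)[OF ij(1)] assms(5)[OF ij(2)] by blast+
      then show False using fij by simp
    qed
    then show ?thesis using po open_closed_segment by blast
  qed
  define S where "S = {(i, j). i \<in> {1..m} \<and> j \<in> {1..m} \<and> i \<noteq> j}"
  have fS: "finite S" unfolding S_def
    by (rule finite_subset[of _ "{1..m} \<times> {1..m}"]) auto
  have "\<exists>e0::real. 0 < e0 \<and> e0 < 1 \<and> (\<forall>\<epsilon>. 0 < \<epsilon> \<and> \<epsilon> \<le> e0 \<longrightarrow> (\<forall>a\<in>S.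
      closed_segment (z (fst a)) (z (snd a)) \<inter> ((\<lambda>x. (1 - \<epsilon>) *\<^sub>R x + \<epsilon> *\<^sub>R c) ` B) \<noteq> {}))"
  proof (rule finite_eps[OF fS])
    fix a assume "a \<in> S"
    then obtain i j where a: "a = (i, j)" "i \<in> {1..m}" "j \<in> {1..m}" "i \<noteq> j"
      by (auto simp: S_def)
    obtain p where p: "p \<in> closed_segment (z i) (z j)" "p \<in> interior B" using key a by blast
    obtain e0 where e0: "0 < e0 \<and> e0 < 1 \<and> (\<forall>\<epsilon>. 0 < \<epsilon> \<and> \<epsilon> \<le> e0 \<longrightarrow>
           p \<in> (\<lambda>x. (1 - \<epsilon>) *\<^sub>R x + \<epsilon> *\<^sub>R c) ` B)" using interior_eps[OF p(2)] by blast
    show "\<exists>e0::real. 0 < e0 \<and> e0 < 1 \<and> (\<forall>\<epsilon>. 0 < \<epsilon> \<and> \<epsilon> \<le> e0 \<longrightarrow>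
      closed_segment (z (fst a)) (z (snd a)) \<inter> ((\<lambda>x. (1 - \<epsilon>) *\<^sub>R x + \<epsilon> *\<^sub>R c) ` B) \<noteq> {})"
      using e0 p(1) a(1) by (intro exI[of _ e0]) auto
  qed
  then obtain e0 where e0: "0 < e0" "e0 < 1" "\<forall>a\<in>S.
      closed_segment (z (fst a)) (z (snd a)) \<inter> ((\<lambda>x. (1 - e0) *\<^sub>R x + e0 *\<^sub>R c) ` B) \<noteq> {}"
    by auto
  show ?thesis
    using e0 by (intro exI[of _ e0]) (auto simp: S_def)
qed

end
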